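(* Under the Physarum dynamics, let $P$ be a path in $G$ from vertex $a$ to vertex $b$, traversed from $a$ to $b$; for each edge $e=(x,y)$ of $P$ in this traversal direction let $\Delta(e)=p_x-p_y$. Let $\Delta(P)=p_a-p_b$, $L(P)=\sum_{e\in P}L_e$ and $W(P)=\sum_{e\in P}L_e\ln D_e$. Then $\dot W(P)=\Delta(P)-L(P)+2\sum_{e\in P:\,\Delta(e)<0}|\Delta(e)|$. If there are real numbers $\bar\Delta$ and $\delta\ge0$ such that for all sufficiently large $t$, $\Delta(P)\le\bar\Delta$ and $\Delta(e)\ge-\delta$ for all $e\in P$, then there is a constant $K$ with $W(P)(t)\le K+(\bar\Delta-L(P)+2n\delta)t$ for all $t\ge0$. If $\Delta(P)\ge\bar\Delta$ for all sufficiently large $t$, then there is a constant $K$ with $W(P)(t)\ge K+(\bar\Delta-L(P))t$ for all $t\ge 0$.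
   Context: Let $G=(N,E)$ be a finite connected undirected graph with $n=|N|$ vertices and two distinct vertices $s_0$ (source) and $s_1$ (sink). Each edge $e$ has a fixed length $L_e>0$. Each edge has a time-dependent diameter $D_e(t)$ with $D_e(0)>0$, and resistance $R_e=L_e/D_e$. At each time $t$, the vertex potentials $p_v$ (normalized by $p_{s_1}=0$) are the solution of $\sum_{u\in\delta(v)}(p_v-p_u)/R_{uv}=b_v$ for all $v$, where $\delta(v)$ is the set of neighbours of $v$, $b_{s_0}=1$, $b_{s_1}=-1$, $b_v=0$ otherwise; for an edge $e=\{u,v\}$ with an arbitrarily fixed orientation $(u,v)$ the current is $Q_e=(p_u-p_v)/R_e=D_e(p_u-p_v)/L_e$. The diameters evolve by $\dot D_e(t)=|Q_e(t)|-D_e(t)$ for all $e\in E$ (the "Physarum dynamics"). Paths are simple. *)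

theory Defs
  imports "HOL-Analysis.Analysis"
begin

definition graph_ok :: "'v set \<Rightarrow> 'v set set \<Rightarrow> 'v \<Rightarrow> 'v \<Rightarrow> bool" where
  "graph_ok N E s0 s1 \<longleftrightarrow> finite N \<and> s0 \<in> N \<and> s1 \<in> N \<and> s0 \<noteq> s1 \<and>
     (\<forall>e\<in>E. \<exists>u v. u \<in> N \<and> v \<in> N \<and> u \<noteq> v \<and> e = {u, v}) \<and>
     (\<forall>u\<in>N. \<forall>v\<in>N. (u, v) \<in> rtrancl {(x, y). {x, y} \<in> E})"

definition nbrs :: "'v set set \<Rightarrow> 'v \<Rightarrow> 'v set" where
  "nbrs E v = {u. {u, v} \<in> E}"

definition node_supply :: "'v \<Rightarrow> 'v \<Rightarrow> 'v \<Rightarrow> real" where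
  "node_supply s0 s1 v = (if v = s0 then 1 else if v = s1 then -1 else 0)"

definition resistance :: "('v set \<Rightarrow> real) \<Rightarrow> ('v set \<Rightarrow> real) \<Rightarrow> 'v set \<Rightarrow> real" where
  "resistance L D e = L e / D e"

definition is_potential :: "'v set \<Rightarrow> 'v set set \<Rightarrow> ('v set \<Rightarrow> real) \<Rightarrow> ('v set \<Rightarrow> real)
    \<Rightarrow> 'v \<Rightarrow> 'v \<Rightarrow> ('v \<Rightarrow> real) \<Rightarrow> bool" where
  "is_potential N E L D s0 s1 p \<longleftrightarrow> p s1 = 0 \<and>
     (\<forall>v\<in>N. (\<Sum>u\<in>nbrs E v. (p v - p u) / resistance L D {u, v}) = node_supply s0 s1 v)"

definition current :: "('v set \<Rightarrow> real) \<Rightarrow> ('v set \<Rightarrow> real) \<Rightarrow> ('v \<Rightarrow> real)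
    \<Rightarrow> ('v set \<Rightarrow> 'v \<times> 'v) \<Rightarrow> 'v set \<Rightarrow> real" where
  "current L D p orient e = (p (fst (orient e)) - p (snd (orient e))) / resistance L D e"

definition is_path :: "'v set set \<Rightarrow> 'v list \<Rightarrow> 'v \<Rightarrow> 'v \<Rightarrow> bool" where
  "is_path E P a b \<longleftrightarrow> P \<noteq> [] \<and> hd P = a \<and> last P = b \<and> distinct P \<and>
     (\<forall>i < length P - 1. {P ! i, P ! Suc i} \<in> E)"

definition path_edge :: "'v list \<Rightarrow> nat \<Rightarrow> 'v set" where
  "path_edge P i = {P ! i, P ! Suc i}"

definition edge_delta :: "('v \<Rightarrow> real) \<Rightarrow> 'v list \<Rightarrow> nat \<Rightarrow> real" where
  "edge_delta p P i = p (P ! i) - p (P ! Suc i)"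

definition path_L :: "('v set \<Rightarrow> real) \<Rightarrow> 'v list \<Rightarrow> real" where
  "path_L L P = (\<Sum>i < length P - 1. L (path_edge P i))"

definition path_W :: "('v set \<Rightarrow> real) \<Rightarrow> ('v set \<Rightarrow> real) \<Rightarrow> 'v list \<Rightarrow> real" where
  "path_W L D P = (\<Sum>i < length P - 1. L (path_edge P i) * ln (D (path_edge P i)))"

end

theory Submission
  imports Defs
begin

lemma mono_within:
  fixes f f' :: "real \<Rightarrow> real"
  assumes "0 \<le> a" "a \<le> b"
    and d: "\<And>x. x \<ge> 0 \<Longrightarrow> (f has_real_derivative f' x) (at x within {0..})"
    and nn: "\<And>x. a \<le> x \<Longrightarrow> x \<le> b \<Longrightarrow> f' x \<ge> 0"
  shows "f a \<le> f b"
proof (rule DERIV_nonneg_imp_increasing_open[OF assms(2)])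
  fix x assume x: "a < x" "x < b"
  have "(f has_real_derivative f' x) (at x within {0<..})"
    using d[of x] x assms(1) by (auto intro: has_field_derivative_subset)
  moreover have "at x within {0<..} = at x" using x assms(1) by (intro at_within_open) auto
  ultimately have "(f has_real_derivative f' x) (at x)" by simp
  then show "\<exists>y. DERIV f x :> y \<and> y \<ge> 0" using nn[of x] x by auto
next
  have "continuous_on {0..} f" by (rule DERIV_continuous_on[OF d]) auto
  then show "continuous_on {a..b} f" by (rule continuous_on_subset) (use assms(1) in auto)
qed

lemma pos_lemma:
  fixes f g :: "real \<Rightarrow> real"
  assumes f0: "f 0 > 0"
    and d: "\<And>x. x \<ge> 0 \<Longrightarrow> (f has_real_derivative (g x - f x)) (at x within {0..})"
    and g: "\<And>x. g x \<ge> 0"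
    and t: "t \<ge> 0"
  shows "f t > 0"
proof -
  have "(\<lambda>x. f x * exp x) 0 \<le> (\<lambda>x. f x * exp x) t"
  proof (rule mono_within[where f="\<lambda>x. f x * exp x" and a=0 and b=t, OF order_refl t])
    fix x :: real assume "x \<ge> 0"
    show "((\<lambda>x. f x * exp x) has_real_derivative (g x * exp x)) (at x within {0..})"
      using DERIV_mult[OF d[OF \<open>x\<ge>0\<close>] DERIV_exp[THEN has_field_derivative_at_within]]
      by (rule DERIV_cong) (simp add: algebra_simps)
  next
    fix x :: real show "g x * exp x \<ge> 0" using g[of x] by simp
  qed
  then have "f t * exp t > 0" using f0 by simp
  then show ?thesis by (simp add: zero_less_mult_iff)
qed

lemma lin_bound:
  fixes W W' :: "real \<Rightarrow> real"
  assumes d: "\<And>x. x \<ge> 0 \<Longrightarrow> (W has_real_derivative W' x) (at x within {0..})"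
    and ev: "\<exists>T. \<forall>t\<ge>T. W' t \<le> c"
  shows "\<exists>K. \<forall>t\<ge>0. W t \<le> K + c * t"
proof -
  obtain T where T: "\<forall>t\<ge>T. W' t \<le> c" using ev by auto
  define T' where "T' = max T 0"
  define g where "g t = W t - c * t" for t
  have dg: "(g has_real_derivative (W' x - c)) (at x within {0..})" if "x \<ge> 0" for x
    unfolding g_def using d[OF that]
    by (auto intro!: derivative_eq_intros)
  have "continuous_on {0..} g" by (rule DERIV_continuous_on[OF dg]) auto
  then have "continuous_on {0..T'} g" by (rule continuous_on_subset) auto
  then obtain x0 where x0: "x0 \<in> {0..T'}" "\<forall>y\<in>{0..T'}. g y \<le> g x0"
    using continuous_attains_sup[of "{0..T'}" g] by (auto simp: T'_def)
  have "W t \<le> g x0 + c * t" if t: "t \<ge> 0" for t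
  proof (cases "t \<le> T'")
    case True then have "g t \<le> g x0" using x0 t by auto
    then show ?thesis by (simp add: g_def)
  next
    case False
    have "(\<lambda>x. - g x) T' \<le> (\<lambda>x. - g x) t"
    proof (rule mono_within[where f="\<lambda>x. - g x" and a=T' and b=t and f'="\<lambda>x. c - W' x"])
      show "0 \<le> T'" "T' \<le> t" using False by (auto simp: T'_def)
      fix x :: real assume "x \<ge> 0"
      show "((\<lambda>x. - g x) has_real_derivative (c - W' x)) (at x within {0..})"
        using DERIV_minus[OF dg[OF \<open>x\<ge>0\<close>]] by simp
    next
      fix x assume "T' \<le> x" "x \<le> t" then show "0 \<le> c - W' x" using T by (auto simp: T'_def)
    qed
    then have "g t \<le> g T'" by simp
    also have "\<dots> \<le> g x0" using x0 by (auto simp: T'_def)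
    finally show ?thesis by (simp add: g_def)
  qed
  then show ?thesis by blast
qed

theorem mainTheorem11:
  fixes N :: "'v set" and E :: "'v set set" and s0 s1 a b :: 'v
    and L :: "'v set \<Rightarrow> real" and D :: "real \<Rightarrow> 'v set \<Rightarrow> real"
    and p :: "real \<Rightarrow> 'v \<Rightarrow> real" and orient :: "'v set \<Rightarrow> 'v \<times> 'v"
    and P :: "'v list"
  assumes graph: "graph_ok N E s0 s1"
    and L_pos: "\<forall>e\<in>E. L e > 0"
    and D0_pos: "\<forall>e\<in>E. D 0 e > 0"
    and orient: "\<forall>e\<in>E. orient e \<in> {(u, v). e = {u, v}}"
    and pot: "\<forall>t\<ge>0. is_potential N E L (D t) s0 s1 (p t)"
    and dyn: "\<forall>e\<in>E. \<forall>t\<ge>0. ((\<lambda>s. D s e) has_real_derivative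
                 (\<bar>current L (D t) (p t) orient e\<bar> - D t e)) (at t within {0..})"
    and path: "is_path E P a b"
  shows
    "(\<forall>t\<ge>0. ((\<lambda>s. path_W L (D s) P) has_real_derivative
        ((p t a - p t b) - path_L L P
          + 2 * (\<Sum>i\<in>{i. i < length P - 1 \<and> edge_delta (p t) P i < 0}. \<bar>edge_delta (p t) P i\<bar>)))
        (at t within {0..}))
   \<and> (\<forall>Dbar \<delta>::real. \<delta> \<ge> 0 \<longrightarrow>
        (\<exists>T. \<forall>t\<ge>T. p t a - p t b \<le> Dbar \<and> (\<forall>i < length P - 1. edge_delta (p t) P i \<ge> - \<delta>)) \<longrightarrow>
        (\<exists>K. \<forall>t\<ge>0. path_W L (D t) P \<le> K + (Dbar - path_L L P + 2 * real (card N) * \<delta>) * t))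
   \<and> (\<forall>Dbar::real.
        (\<exists>T. \<forall>t\<ge>T. p t a - p t b \<ge> Dbar) \<longrightarrow>
        (\<exists>K. \<forall>t\<ge>0. path_W L (D t) P \<ge> K + (Dbar - path_L L P) * t))"
proof -
  define m where "m = length P - 1"
  define dW where "dW t = ((p t a - p t b) - path_L L P
          + 2 * (\<Sum>i\<in>{i. i < length P - 1 \<and> edge_delta (p t) P i < 0}. \<bar>edge_delta (p t) P i\<bar>))" for t
  have inN: "x \<in> N" if xe: "x \<in> e" "e \<in> E" for x e
  proof -
    have "\<forall>e\<in>E. \<exists>u v. u \<in> N \<and> v \<in> N \<and> u \<noteq> v \<and> e = {u, v}"
      using graph unfolding graph_ok_def by (elim conjE)
    then obtain u v where "u \<in> N" "v \<in> N" "e = {u, v}" using xe(2) by blast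
    then show ?thesis using xe(1) by blast
  qed
  have Pne: "P \<noteq> []" and hdP: "hd P = a" and lastP: "last P = b" and dist: "distinct P"
    and pE: "\<And>i. i < m \<Longrightarrow> path_edge P i \<in> E"
    using path unfolding is_path_def path_edge_def m_def by auto
  have Lpos: "L (path_edge P i) > 0" if "i < m" for i using L_pos pE[OF that] by auto
  have Dpos: "D t e > 0" if "e \<in> E" "t \<ge> 0" for e t
  proof (rule pos_lemma[where f="\<lambda>s. D s e" and g="\<lambda>s. \<bar>current L (D s) (p s) orient e\<bar>"])
    show "D 0 e > 0" using D0_pos that by blast
    show "t \<ge> 0" by (rule that(2))
    show "\<And>x. \<bar>current L (D x) (p x) orient e\<bar> \<ge> 0" by simp
    fix x :: real assume "x \<ge> 0"
    then show "((\<lambda>s. D s e) has_real_derivative (\<bar>current L (D x) (p x) orient e\<bar> - D x e)) (at x within {0..})"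
      using dyn that(1) by blast
  qed
  have absQ: "\<bar>current L (D t) (p t) orient (path_edge P i)\<bar>
      = \<bar>edge_delta (p t) P i\<bar> * D t (path_edge P i) / L (path_edge P i)"
    if i: "i < m" and t: "t \<ge> 0" for i t
  proof -
    define e where "e = path_edge P i"
    have eE: "e \<in> E" using pE[OF i] by (simp add: e_def)
    obtain u v where uv: "orient e = (u, v)" "e = {u, v}"
    proof -
      have "orient e \<in> {(u, v). e = {u, v}}" using orient eE by (rule bspec)
      then show ?thesis using that by (cases "orient e") simp
    qed
    have "(u = P ! i \<and> v = P ! Suc i) \<or> (u = P ! Suc i \<and> v = P ! i)"
      using uv(2) unfolding e_def path_edge_def doubleton_eq_iff by blast
    then have dd: "\<bar>p t u - p t v\<bar> = \<bar>edge_delta (p t) P i\<bar>"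
      unfolding edge_delta_def
    proof (elim disjE conjE)
      assume "u = P ! i" "v = P ! Suc i" then show "\<bar>p t u - p t v\<bar> = \<bar>p t (P ! i) - p t (P ! Suc i)\<bar>" by simp
    next
      assume "u = P ! Suc i" "v = P ! i" then show "\<bar>p t u - p t v\<bar> = \<bar>p t (P ! i) - p t (P ! Suc i)\<bar>"
        by (simp add: abs_minus_commute)
    qed
    have "D t e > 0" using Dpos[OF eE t] .
    moreover have "L e > 0" using Lpos[OF i] unfolding e_def .
    ultimately have "\<bar>current L (D t) (p t) orient e\<bar> = \<bar>p t u - p t v\<bar> * D t e / L e"
      unfolding current_def resistance_def uv(1) fst_conv snd_conv
      by (simp add: abs_divide abs_mult)
    then show ?thesis using dd by (simp add: e_def)
  qed
  have dterm: "((\<lambda>s. L (path_edge P i) * ln (D s (path_edge P i))) has_real_derivative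
        (\<bar>edge_delta (p t) P i\<bar> - L (path_edge P i))) (at t within {0..})"
    if i: "i < m" and t: "t \<ge> 0" for i t
  proof -
    define e where "e = path_edge P i"
    have eE: "e \<in> E" using pE[OF i] by (simp add: e_def)
    have Dp: "D t e > 0" and Lp: "L e > 0" using Dpos[OF eE t] Lpos[OF i] by (auto simp: e_def)
    have d1: "((\<lambda>s. D s e) has_real_derivative
        (\<bar>edge_delta (p t) P i\<bar> * D t e / L e - D t e)) (at t within {0..})"
    proof -
      have "((\<lambda>s. D s e) has_real_derivative
        (\<bar>current L (D t) (p t) orient e\<bar> - D t e)) (at t within {0..})"
        using dyn eE t by blast
      then show ?thesis using absQ[OF i t] unfolding e_def by simp
    qed
    note d2 = DERIV_cmult[OF DERIV_chain2[where g="\<lambda>s. D s e" and x=t, OF DERIV_ln_divide[OF Dp] d1], of "L e"]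
    have eq: "L e * (1 / D t e * (\<bar>edge_delta (p t) P i\<bar> * D t e / L e - D t e))
        = \<bar>edge_delta (p t) P i\<bar> - L e"
      using Dp Lp by (simp add: field_simps)
    show ?thesis using d2 unfolding eq by (simp add: e_def o_def)
  qed
  have sumeq: "(\<Sum>i<m. \<bar>edge_delta (p t) P i\<bar> - L (path_edge P i)) = dW t" for t
  proof -
    have abs_split: "\<bar>x\<bar> = x + 2 * (if x < 0 then \<bar>x\<bar> else 0)" for x :: real by auto
    have "(\<Sum>i<m. \<bar>edge_delta (p t) P i\<bar>) = (\<Sum>i<m. edge_delta (p t) P i)
        + 2 * (\<Sum>i<m. if edge_delta (p t) P i < 0 then \<bar>edge_delta (p t) P i\<bar> else 0)"
      by (subst abs_split) (simp add: sum.distrib sum_distrib_left)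
    also have "(\<Sum>i<m. if edge_delta (p t) P i < 0 then \<bar>edge_delta (p t) P i\<bar> else 0)
        = (\<Sum>i\<in>{i. i < length P - 1 \<and> edge_delta (p t) P i < 0}. \<bar>edge_delta (p t) P i\<bar>)"
    proof -
      have "(\<Sum>i<m. if edge_delta (p t) P i < 0 then \<bar>edge_delta (p t) P i\<bar> else 0)
          = (\<Sum>i\<in>{i \<in> {..<m}. edge_delta (p t) P i < 0}. \<bar>edge_delta (p t) P i\<bar>)"
        by (rule sum.inter_filter[symmetric]) simp
      also have "{i \<in> {..<m}. edge_delta (p t) P i < 0} = {i. i < length P - 1 \<and> edge_delta (p t) P i < 0}"
        by (auto simp: m_def)
      finally show ?thesis .
    qed
    also have "(\<Sum>i<m. edge_delta (p t) P i) = p t (P ! 0) - p t (P ! m)"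
      unfolding edge_delta_def by (rule sum_lessThan_telescope')
    also have "P ! 0 = a" using Pne hdP by (simp add: hd_conv_nth)
    also have "P ! m = b" using Pne lastP by (simp add: last_conv_nth m_def)
    finally show ?thesis
      unfolding dW_def path_L_def m_def[symmetric] by (simp add: sum_subtractf)
  qed
  have deriv: "((\<lambda>s. path_W L (D s) P) has_real_derivative dW t) (at t within {0..})"
    if t: "t \<ge> 0" for t
  proof -
    have "((\<lambda>s. \<Sum>i<m. L (path_edge P i) * ln (D s (path_edge P i))) has_real_derivative
        (\<Sum>i<m. \<bar>edge_delta (p t) P i\<bar> - L (path_edge P i))) (at t within {0..})"
      by (rule DERIV_sum) (use dterm t in auto)
    then show ?thesis unfolding sumeq unfolding path_W_def m_def .
  qed
  have part1: "\<forall>t\<ge>0. ((\<lambda>s. path_W L (D s) P) has_real_derivative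
        ((p t a - p t b) - path_L L P
          + 2 * (\<Sum>i\<in>{i. i < length P - 1 \<and> edge_delta (p t) P i < 0}. \<bar>edge_delta (p t) P i\<bar>)))
        (at t within {0..})"
    using deriv unfolding dW_def by blast
  have mN: "m \<le> card N"
  proof (cases "m = 0")
    case True then show ?thesis by simp
  next
    case False
    have "set P \<subseteq> N"
    proof
      fix x assume "x \<in> set P"
      then obtain j where j: "j < length P" "x = P ! j" by (auto simp: in_set_conv_nth)
      show "x \<in> N"
      proof (cases "j < m")
        case True then show ?thesis using inN[OF _ pE[OF True]] j by (auto simp: path_edge_def)
      next
        case False
        then have "j = Suc (m - 1)" "m - 1 < m" using j \<open>m \<noteq> 0\<close> by (auto simp: m_def)
        then show ?thesis using inN[OF _ pE[of "m - 1"]] j by (auto simp: path_edge_def)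
      qed
    qed
    moreover have "finite N" using graph by (simp add: graph_ok_def)
    ultimately have "card (set P) \<le> card N" by (simp add: card_mono)
    then show ?thesis using distinct_card[OF dist] by (simp add: m_def)
  qed
  have part2: "\<forall>Dbar \<delta>::real. \<delta> \<ge> 0 \<longrightarrow>
        (\<exists>T. \<forall>t\<ge>T. p t a - p t b \<le> Dbar \<and> (\<forall>i < length P - 1. edge_delta (p t) P i \<ge> - \<delta>)) \<longrightarrow>
        (\<exists>K. \<forall>t\<ge>0. path_W L (D t) P \<le> K + (Dbar - path_L L P + 2 * real (card N) * \<delta>) * t)"
  proof (intro allI impI)
    fix Dbar \<delta> :: real assume \<delta>: "\<delta> \<ge> 0"
      and "\<exists>T. \<forall>t\<ge>T. p t a - p t b \<le> Dbar \<and> (\<forall>i < length P - 1. edge_delta (p t) P i \<ge> - \<delta>)"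
    then obtain T where T: "\<And>t. t \<ge> T \<Longrightarrow> p t a - p t b \<le> Dbar"
        "\<And>t i. t \<ge> T \<Longrightarrow> i < m \<Longrightarrow> edge_delta (p t) P i \<ge> - \<delta>"
      by (auto simp: m_def)
    show "\<exists>K. \<forall>t\<ge>0. path_W L (D t) P \<le> K + (Dbar - path_L L P + 2 * real (card N) * \<delta>) * t"
    proof (rule lin_bound[where W'=dW])
      show "\<And>x. x \<ge> 0 \<Longrightarrow> ((\<lambda>s. path_W L (D s) P) has_real_derivative dW x) (at x within {0..})"
        by (rule deriv)
      show "\<exists>T. \<forall>t\<ge>T. dW t \<le> Dbar - path_L L P + 2 * real (card N) * \<delta>"
      proof (intro exI allI impI)
        fix t assume t: "t \<ge> T"
        define S where "S = {i. i < length P - 1 \<and> edge_delta (p t) P i < 0}"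
        have Ssub: "S \<subseteq> {..<m}" by (auto simp: S_def m_def)
        have "(\<Sum>i\<in>S. \<bar>edge_delta (p t) P i\<bar>) \<le> real (card S) * \<delta>"
        proof (rule sum_bounded_above)
          fix i assume "i \<in> S"
          then have "i < m" "edge_delta (p t) P i < 0" by (auto simp: S_def m_def)
          then show "\<bar>edge_delta (p t) P i\<bar> \<le> \<delta>" using T(2)[OF t] by force
        qed
        also have "card S \<le> m" using card_mono[OF _ Ssub] by simp
        then have "real (card S) * \<delta> \<le> real (card N) * \<delta>"
          using mN \<delta> by (intro mult_right_mono) auto
        finally have "(\<Sum>i\<in>S. \<bar>edge_delta (p t) P i\<bar>) \<le> real (card N) * \<delta>" .
        then show "dW t \<le> Dbar - path_L L P + 2 * real (card N) * \<delta>"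
          using T(1)[OF t] unfolding dW_def S_def by linarith
      qed
    qed
  qed
  have part3: "\<forall>Dbar::real.
        (\<exists>T. \<forall>t\<ge>T. p t a - p t b \<ge> Dbar) \<longrightarrow>
        (\<exists>K. \<forall>t\<ge>0. path_W L (D t) P \<ge> K + (Dbar - path_L L P) * t)"
  proof (intro allI impI)
    fix Dbar :: real assume "\<exists>T. \<forall>t\<ge>T. p t a - p t b \<ge> Dbar"
    then obtain T where T: "\<And>t. t \<ge> T \<Longrightarrow> p t a - p t b \<ge> Dbar" by auto
    have "\<exists>K. \<forall>t\<ge>0. - path_W L (D t) P \<le> K + (- (Dbar - path_L L P)) * t"
    proof (rule lin_bound[where W'="\<lambda>t. - dW t"])
      show "\<And>x. x \<ge> 0 \<Longrightarrow> ((\<lambda>s. - path_W L (D s) P) has_real_derivative - dW x) (at x within {0..})"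
        by (rule DERIV_minus, rule deriv)
      show "\<exists>T. \<forall>t\<ge>T. - dW t \<le> - (Dbar - path_L L P)"
      proof (intro exI allI impI)
        fix t assume t: "t \<ge> T"
        have "0 \<le> (\<Sum>i\<in>{i. i < length P - 1 \<and> edge_delta (p t) P i < 0}. \<bar>edge_delta (p t) P i\<bar>)"
          by (rule sum_nonneg) auto
        then show "- dW t \<le> - (Dbar - path_L L P)" using T[OF t] unfolding dW_def by linarith
      qed
    qed
    then obtain K where K: "\<And>t. t \<ge> 0 \<Longrightarrow> - path_W L (D t) P \<le> K + (- (Dbar - path_L L P)) * t"
      by auto
    show "\<exists>K. \<forall>t\<ge>0. path_W L (D t) P \<ge> K + (Dbar - path_L L P) * t"
      by (rule exI[of _ "- K"]) (use K in \<open>auto simp: algebra_simps\<close>)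
  qed
  show ?thesis using part1 part2 part3 by blast
qed

end
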